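(* Let $n\ge 2$ and $N(x)=1-x$. Then $\mathbf{H}$ is self-dual with respect to $N$: $1-\mathbf{H}(1-x_1,\dots,1-x_n)=\mathbf{H}(x_1,\dots,x_n)$ for all $\mathbf{x}\in[0,1]^n$.
   Context: For $\mathbf{x}\in[0,1]^n$ let $x_{(1)}\ge\dots\ge x_{(n)}$ be its entries in decreasing order, and define the median $Med(\mathbf{x})=\frac12(x_{(k)}+x_{(k+1)})$ if $n=2k$ and $Med(\mathbf{x})=x_{(k+1)}$ if $n=2k+1$. Define $f_i(\mathbf{x})=\frac1n$ if $x_1=\dots=x_n$, and otherwise $f_i(\mathbf{x})=\frac{1}{n-1}\Big(1-\frac{|x_i-Med(\mathbf{x})|}{\sum_{j=1}^n|x_j-Med(\mathbf{x})|}\Big)$. Then $\mathbf{H}(\mathbf{x})=\sum_{i=1}^n f_i(\mathbf{x})\,x_i$. *)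

theory Defs
  imports Main "HOL.Real"
begin

text \<open>Vectors x in [0,1]^n are represented as real lists of length n; entry x_i is xs ! (i-1).
  The decreasingly ordered entries x_(1) >= ... >= x_(n) are rev (sort xs).\<close>

definition Med :: "real list \<Rightarrow> real" where
  "Med xs = (let n = length xs; s = rev (sort xs); k = n div 2 in
     if even n then (s ! (k - 1) + s ! k) / 2 else s ! k)"

definition fw :: "nat \<Rightarrow> real list \<Rightarrow> real" where
  "fw i xs = (let n = length xs; m = Med xs in
     if (\<forall>j<n. \<forall>l<n. xs ! j = xs ! l) then 1 / real n
     else (1 / (real n - 1)) * (1 - \<bar>xs ! i - m\<bar> / (\<Sum>j<n. \<bar>xs ! j - m\<bar>)))"

definition H :: "real list \<Rightarrow> real" where
  "H xs = (\<Sum>i<length xs. fw i xs * xs ! i)"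

end

theory Submission
  imports Defs "HOL-Library.Multiset"
begin

lemma sort_neg: "sort (map (\<lambda>x. 1 - x) (xs::real list)) = rev (map (\<lambda>x. 1 - x) (sort xs))"
proof (rule properties_for_sort)
  show "mset (rev (map (\<lambda>x. 1 - x) (sort xs))) = mset (map (\<lambda>x. 1 - x) xs)"
    by simp
  have "sorted_wrt (\<le>) (sort xs)" by (simp add: sorted_sort_id)
  hence "sorted_wrt (\<lambda>a b. 1 - a \<ge> 1 - b) (sort xs)"
    by (rule sorted_wrt_mono_rel[rotated]) auto
  thus "sorted (rev (map (\<lambda>x. 1 - x) (sort xs)))"
    by (simp add: sorted_wrt_map sorted_wrt_rev)
qed

lemma Med_neg:
  assumes "length xs \<ge> 1"
  shows "Med (map (\<lambda>x. 1 - x) (xs::real list)) = 1 - Med xs"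
proof -
  let ?s = "sort xs"
  have L: "length ?s = length xs" by simp
  have A: "rev (sort (map (\<lambda>x. 1 - x) xs)) ! i = 1 - ?s ! i" if "i < length xs" for i
    using that by (simp add: sort_neg)
  have B: "rev ?s ! i = ?s ! (length xs - Suc i)" if "i < length xs" for i
    using that by (simp add: rev_nth)
  show ?thesis
  proof (cases "even (length xs)")
    case True
    then obtain k where k: "length xs = 2*k" by blast
    with assms have "k \<ge> 1" by simp
    have i1: "k - 1 < length xs" "k < length xs" using k \<open>k \<ge> 1\<close> by linarith+
    have j1: "length xs - Suc (k - 1) = k" "length xs - Suc k = k - 1"
      using k \<open>k \<ge> 1\<close> by linarith+
    have e1: "rev ?s ! (k - 1) = ?s ! k" using B[OF i1(1)] j1(1) by metis
    have e2: "rev ?s ! k = ?s ! (k - 1)" using B[OF i1(2)] j1(2) by metis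
    have a1: "rev (sort (map (\<lambda>x. 1 - x) xs)) ! (k - 1) = 1 - ?s ! (k - 1)"
      using A[OF i1(1)] .
    have a2: "rev (sort (map (\<lambda>x. 1 - x) xs)) ! k = 1 - ?s ! k"
      using A[OF i1(2)] .
    have m1: "Med xs = (rev ?s ! (k - 1) + rev ?s ! k) / 2"
      unfolding Med_def Let_def using True k by simp
    have m2: "Med (map (\<lambda>x. 1 - x) xs) = (rev (sort (map (\<lambda>x. 1 - x) xs)) ! (k - 1)
       + rev (sort (map (\<lambda>x. 1 - x) xs)) ! k) / 2"
      unfolding Med_def Let_def using True k by simp
    show ?thesis
      unfolding m1 m2 a1 a2 e1 e2 by (simp add: field_simps)
  next
    case False
    then obtain k where k: "length xs = 2*k+1" by (metis oddE)
    show ?thesis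
      unfolding Med_def Let_def using False A[of k] B[of k] k by simp
  qed
qed

lemma fw_cong:
  assumes "length ys = length xs"
    and "\<And>j. j < length xs \<Longrightarrow> \<bar>ys ! j - Med ys\<bar> = \<bar>xs ! j - Med xs\<bar>"
    and "(\<forall>j<length xs. \<forall>l<length xs. ys ! j = ys ! l) = (\<forall>j<length xs. \<forall>l<length xs. xs ! j = xs ! l)"
    and "i < length xs"
  shows "fw i ys = fw i xs"
proof -
  have "(\<Sum>j<length xs. \<bar>ys ! j - Med ys\<bar>) = (\<Sum>j<length xs. \<bar>xs ! j - Med xs\<bar>)"
    using assms(2) by (intro sum.cong) auto
  then show ?thesis unfolding fw_def Let_def assms(1) assms(3) assms(2)[OF assms(4)] by presburger
qed

theorem proposition17:
  fixes xs :: "real list"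
  assumes "length xs \<ge> 2"
    and "\<forall>x\<in>set xs. 0 \<le> x \<and> x \<le> 1"
  shows "1 - H (map (\<lambda>x. 1 - x) xs) = H xs"
proof -
  let ?ys = "map (\<lambda>x. 1 - x) xs"
  let ?n = "length xs"
  have M: "Med ?ys = 1 - Med xs" using assms(1) by (intro Med_neg) simp
  have C: "(\<forall>j<?n. \<forall>l<?n. ?ys ! j = ?ys ! l) = (\<forall>j<?n. \<forall>l<?n. xs ! j = xs ! l)"
    by auto
  have F: "fw i ?ys = fw i xs" if "i < ?n" for i
    by (rule fw_cong) (use that M C in auto)
  have S: "(\<Sum>i<?n. fw i xs) = 1"
  proof (cases "\<forall>j<?n. \<forall>l<?n. xs ! j = xs ! l")
    case True
    have "fw i xs = 1 / real ?n" for i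
      unfolding fw_def Let_def if_P[OF True] by (rule refl)
    moreover have "real ?n \<noteq> 0" using assms(1) by (cases xs) auto
    ultimately show ?thesis by simp
  next
    case False
    define m where "m = Med xs"
    define D where "D = (\<Sum>j<?n. \<bar>xs ! j - m\<bar>)"
    have "D \<noteq> 0"
    proof
      assume "D = 0"
      hence "\<forall>j\<in>{..<?n}. \<bar>xs ! j - m\<bar> = 0" unfolding D_def
        by (subst sum_nonneg_eq_0_iff[symmetric]) auto
      hence "\<forall>j<?n. xs ! j = m" by auto
      with False show False by auto
    qed
    have "(\<Sum>i<?n. fw i xs) = (\<Sum>i<?n. (1 / (real ?n - 1)) * (1 - \<bar>xs ! i - m\<bar> / D))"
      unfolding fw_def Let_def if_not_P[OF False] m_def D_def by (rule refl)
    also have "\<dots> = (1 / (real ?n - 1)) * (real ?n - (\<Sum>i<?n. \<bar>xs ! i - m\<bar>) / D)"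
      by (simp add: sum_distrib_left[symmetric] sum_subtractf sum_divide_distrib[symmetric])
    also have "\<dots> = 1" using \<open>D \<noteq> 0\<close> assms(1) unfolding D_def[symmetric]
      by (simp add: field_simps)
    finally show ?thesis .
  qed
  have "H ?ys = (\<Sum>i<?n. fw i xs * (1 - xs ! i))"
    unfolding H_def by (intro sum.cong) (auto simp: F)
  also have "\<dots> = (\<Sum>i<?n. fw i xs) - H xs"
    unfolding H_def by (simp add: algebra_simps sum_subtractf)
  finally show ?thesis using S by simp
qed

end
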